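(* Let $M\in SL(N,\mathbb Z)$ be a matrix of type $\mathcal J$ with characteristic polynomial $C=B_0B_1\cdots B_k$ as in the definition of type $\mathcal J$. Then any primary Dirichlet family $\mathcal D$ for $M$ is special, i.e. the subgroup of $SL(N,\mathbb Z)$ generated by the matrices $D(M^\top)$, $D\in\mathcal D$, contains at least one matrix without eigenvalue $1$.
   Context: An integer polynomial $C$ is of type $\mathcal J$ if $C=B_0B_1\cdots B_k$ with $k\ge1$, $B_i\in\mathbb Z[t]$: $B_0$ has no real roots; each $B_i$ ($i\ge1$) is irreducible with at least one real root and at least one non-real root; for $i\ne j$, $(B_i)+(B_j)=\mathbb Z[t]$. $M$ is of type $\mathcal J$ if its characteristic polynomial is. Let $\alpha_1,\dots,\alpha_s$ be the real eigenvalues of $M$, and $\alpha_{j,1},\dots,\alpha_{j,s_j}$ the real roots of $B_j$. A Dirichlet family for $M$ is a family of $s$ polynomials $D_1,\dots,D_s\in\mathbb Z[t]$ with $D_i(M)\in SL(N,\mathbb Z)$, $D_i(\alpha_j)>0$ for all $i,j$, and the vectors $(\log D_i(\alpha_1),\dots,\log D_i(\alpha_s))$ forming a basis of $\mathbb R^s$. It is primary (w.r.t. the factorization) if it is indexed as $(D_{j,i})_{1\le j\le k,1\le i\le s_j}$ and there are $P_{j,i}\in\mathbb Z[t]$, invertible in $\mathbb Z[t]/(B_j)$, with $P_{j,i}(\alpha_{j,l})>0$ for all $i,l$ and the vectors $(\log P_{j,i}(\alpha_{j,1}),\dots,\log P_{j,i}(\alpha_{j,s_j}))$, $1\le i\le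 s_j$, a basis of $\mathbb R^{s_j}$, such that $D_{j,i}\equiv t\bmod B_0$, $D_{j,i}\equiv P_{j,i}\bmod B_j$, and $D_{j,i}\equiv1\bmod B_\mu$ for $\mu\notin\{0,j\}$. *)

theory Defs
  imports "Jordan_Normal_Form.Jordan_Normal_Form" "HOL-Computational_Algebra.Polynomial"
begin

definition poly_mat :: "'a :: comm_ring_1 poly \<Rightarrow> 'a mat \<Rightarrow> 'a mat" where
  "poly_mat p A = mat (dim_row A) (dim_col A)
     (\<lambda>(r, c). \<Sum>i\<le>degree p. coeff p i * (A ^\<^sub>m i) $$ (r, c))"

definition SL_int :: "nat \<Rightarrow> int mat set" where
  "SL_int N = {A. A \<in> carrier_mat N N \<and> det A = 1}"

inductive_set gen_group :: "nat \<Rightarrow> int mat set \<Rightarrow> int mat set" for N G where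
  gen_one: "1\<^sub>m N \<in> gen_group N G"
| gen_mult: "g \<in> G \<Longrightarrow> A \<in> gen_group N G \<Longrightarrow> g * A \<in> gen_group N G"
| gen_inv: "g \<in> G \<Longrightarrow> X \<in> carrier_mat N N \<Longrightarrow> X * g = 1\<^sub>m N \<Longrightarrow> A \<in> gen_group N G
            \<Longrightarrow> X * A \<in> gen_group N G"

definition real_roots_int :: "int poly \<Rightarrow> real set" where
  "real_roots_int B = {x. poly (map_poly of_int B) x = 0}"

definition has_nonreal_root :: "int poly \<Rightarrow> bool" where
  "has_nonreal_root B \<longleftrightarrow> (\<exists>z::complex. Im z \<noteq> 0 \<and> poly (map_poly of_int B) z = 0)"

definition comaximal :: "int poly \<Rightarrow> int poly \<Rightarrow> bool" where
  "comaximal B B' \<longleftrightarrow> (\<exists>u v. u * B + v * B' = 1)"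

definition type_J_factorization :: "int poly \<Rightarrow> nat \<Rightarrow> (nat \<Rightarrow> int poly) \<Rightarrow> bool" where
  "type_J_factorization C k B \<longleftrightarrow>
     k \<ge> 1 \<and> C = (\<Prod>i\<in>{0..k}. B i) \<and>
     real_roots_int (B 0) = {} \<and>
     (\<forall>i\<in>{1..k}. irreducible (B i) \<and> real_roots_int (B i) \<noteq> {} \<and> has_nonreal_root (B i)) \<and>
     (\<forall>i\<in>{0..k}. \<forall>j\<in>{0..k}. i \<noteq> j \<longrightarrow> comaximal (B i) (B j))"

definition real_eigenvalues :: "int mat \<Rightarrow> real set" where
  "real_eigenvalues M = {x. eigenvalue (map_mat real_of_int M) x}"

definition is_basis_family :: "'i set \<Rightarrow> 'b set \<Rightarrow> ('i \<Rightarrow> 'b \<Rightarrow> real) \<Rightarrow> bool" where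
  "is_basis_family I A v \<longleftrightarrow>
     (\<forall>w. \<exists>!c. c \<in> extensional I \<and> (\<forall>a\<in>A. w a = (\<Sum>i\<in>I. c i * v i a)))"

definition dirichlet_family :: "nat \<Rightarrow> int mat \<Rightarrow> 'i set \<Rightarrow> ('i \<Rightarrow> int poly) \<Rightarrow> bool" where
  "dirichlet_family N M I D \<longleftrightarrow>
     finite I \<and> card I = card (real_eigenvalues M) \<and>
     (\<forall>i\<in>I. poly_mat (D i) M \<in> SL_int N) \<and>
     (\<forall>i\<in>I. \<forall>\<alpha>\<in>real_eigenvalues M. poly (map_poly of_int (D i)) \<alpha> > 0) \<and>
     is_basis_family I (real_eigenvalues M) (\<lambda>i \<alpha>. ln (poly (map_poly of_int (D i)) \<alpha>))"

definition primary_index :: "nat \<Rightarrow> (nat \<Rightarrow> int poly) \<Rightarrow> (nat \<times> nat) set" where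
  "primary_index k B = {(j, i). 1 \<le> j \<and> j \<le> k \<and> 1 \<le> i \<and> i \<le> card (real_roots_int (B j))}"

definition primary_dirichlet_family ::
  "nat \<Rightarrow> int mat \<Rightarrow> nat \<Rightarrow> (nat \<Rightarrow> int poly) \<Rightarrow> (nat \<times> nat \<Rightarrow> int poly) \<Rightarrow> bool" where
  "primary_dirichlet_family N M k B D \<longleftrightarrow>
     dirichlet_family N M (primary_index k B) D \<and>
     (\<exists>P :: nat \<times> nat \<Rightarrow> int poly.
        (\<forall>j\<in>{1..k}.
           (\<forall>i\<in>{1..card (real_roots_int (B j))}.
              (\<exists>Q. B j dvd (P (j, i) * Q - 1)) \<and>
              (\<forall>\<alpha>\<in>real_roots_int (B j). poly (map_poly of_int (P (j, i))) \<alpha> > 0)) \<and>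
           is_basis_family {1..card (real_roots_int (B j))} (real_roots_int (B j))
             (\<lambda>i \<alpha>. ln (poly (map_poly of_int (P (j, i))) \<alpha>))) \<and>
        (\<forall>(j, i)\<in>primary_index k B.
           B 0 dvd (D (j, i) - [:0, 1:]) \<and>
           B j dvd (D (j, i) - P (j, i)) \<and>
           (\<forall>\<mu>\<in>{1..k}. \<mu> \<noteq> j \<longrightarrow> B \<mu> dvd (D (j, i) - 1))))"

end

theory Submission
  imports Defs "Berlekamp_Zassenhaus.Factor_Bound"
begin

lemma pow_mat_carrier': "A \<in> carrier_mat n n \<Longrightarrow> A ^\<^sub>m i \<in> carrier_mat n n" by simp

lemma pow_mat_Suc_left: assumes A: "(A :: 'a :: comm_ring_1 mat) \<in> carrier_mat n n"
  shows "A ^\<^sub>m Suc i = A * A ^\<^sub>m i"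
proof (induction i)
  case 0 then show ?case using A by simp
next
  case (Suc i)
  have "A ^\<^sub>m Suc (Suc i) = (A * A ^\<^sub>m i) * A" using Suc by simp
  also have "\<dots> = A * (A ^\<^sub>m i * A)" using A by (simp add: assoc_mult_mat[of _ n n _ n _ n])
  finally show ?case by simp
qed

lemma poly_mat_dim[simp]: "dim_row (poly_mat p A) = dim_row A" "dim_col (poly_mat p A) = dim_col A"
  unfolding poly_mat_def by auto

lemma poly_mat_carrier[simp]: "A \<in> carrier_mat n n \<Longrightarrow> poly_mat p A \<in> carrier_mat n n"
  unfolding poly_mat_def by auto

lemma poly_mat_entry: assumes A: "A \<in> carrier_mat n n" and r: "r < n" and c: "c < n"
  and m: "degree p \<le> m"
shows "poly_mat p A $$ (r, c) = (\<Sum>i\<le>m. poly.coeff p i * (A ^\<^sub>m i) $$ (r, c))"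
proof -
  have "poly_mat p A $$ (r, c) = (\<Sum>i\<le>degree p. poly.coeff p i * (A ^\<^sub>m i) $$ (r, c))"
    unfolding poly_mat_def using A r c by auto
  also have "\<dots> = (\<Sum>i\<le>m. poly.coeff p i * (A ^\<^sub>m i) $$ (r, c))"
    by (rule sum.mono_neutral_left) (use m in \<open>auto simp: coeff_eq_0\<close>)
  finally show ?thesis .
qed

lemma poly_mat_add: assumes A: "A \<in> carrier_mat n n"
  shows "poly_mat (p + q) A = poly_mat p A + poly_mat q A"
proof (rule eq_matI)
  fix r c assume "r < dim_row (poly_mat p A + poly_mat q A)" "c < dim_col (poly_mat p A + poly_mat q A)"
  then have r: "r < n" and c: "c < n" using A by auto
  let ?m = "max (degree p) (degree q)"
  have d: "degree (p + q) \<le> ?m" by (rule degree_add_le) auto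
  show "poly_mat (p + q) A $$ (r, c) = (poly_mat p A + poly_mat q A) $$ (r, c)"
  proof -
    have "(poly_mat p A + poly_mat q A) $$ (r, c) = poly_mat p A $$ (r, c) + poly_mat q A $$ (r, c)"
      using A r c by (intro index_add_mat) auto
    then show ?thesis
    using poly_mat_entry[OF A r c d] poly_mat_entry[OF A r c, of p ?m] poly_mat_entry[OF A r c, of q ?m]
      by (simp add: sum.distrib distrib_right)
  qed
qed (use A in auto)

lemma poly_mat_minus: assumes A: "A \<in> carrier_mat n n"
  shows "poly_mat (p - q) A = poly_mat p A - poly_mat q A"
proof (rule eq_matI)
  fix r c assume "r < dim_row (poly_mat p A - poly_mat q A)" "c < dim_col (poly_mat p A - poly_mat q A)"
  then have r: "r < n" and c: "c < n" using A by auto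
  let ?m = "max (degree p) (degree q)"
  have d: "degree (p - q) \<le> ?m" by (rule degree_diff_le) auto
  show "poly_mat (p - q) A $$ (r, c) = (poly_mat p A - poly_mat q A) $$ (r, c)"
  proof -
    have "(poly_mat p A - poly_mat q A) $$ (r, c) = poly_mat p A $$ (r, c) - poly_mat q A $$ (r, c)"
      using A r c by (intro index_minus_mat) auto
    then show ?thesis
    using poly_mat_entry[OF A r c d] poly_mat_entry[OF A r c, of p ?m] poly_mat_entry[OF A r c, of q ?m]
      by (simp add: sum_subtractf left_diff_distrib)
  qed
qed (use A in auto)

lemma poly_mat_smult: assumes A: "A \<in> carrier_mat n n"
  shows "poly_mat (Polynomial.smult a p) A = a \<cdot>\<^sub>m poly_mat p A"
proof (rule eq_matI)
  fix r c assume "r < dim_row (a \<cdot>\<^sub>m poly_mat p A)" "c < dim_col (a \<cdot>\<^sub>m poly_mat p A)"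
  then have r: "r < n" and c: "c < n" using A by auto
  have d: "degree (Polynomial.smult a p) \<le> degree p" by (rule degree_smult_le)
  show "poly_mat (Polynomial.smult a p) A $$ (r, c) = (a \<cdot>\<^sub>m poly_mat p A) $$ (r, c)"
    using poly_mat_entry[OF A r c d] poly_mat_entry[OF A r c, of p "degree p"]
      A r c by (simp add: sum_distrib_left mult.assoc)
qed (use A in auto)

lemma poly_mat_pCons: assumes A: "(A :: 'a :: comm_ring_1 mat) \<in> carrier_mat n n"
  shows "poly_mat (pCons a p) A = a \<cdot>\<^sub>m 1\<^sub>m n + A * poly_mat p A"
proof (rule eq_matI)
  fix r c assume "r < dim_row (a \<cdot>\<^sub>m 1\<^sub>m n + A * poly_mat p A)" "c < dim_col (a \<cdot>\<^sub>m 1\<^sub>m n + A * poly_mat p A)"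
  then have r: "r < n" and c: "c < n" using A by auto
  let ?d = "degree p"
  have d: "degree (pCons a p) \<le> Suc ?d" by (simp add: degree_pCons_le)
  have "poly_mat (pCons a p) A $$ (r, c) = (\<Sum>i\<le>Suc ?d. poly.coeff (pCons a p) i * (A ^\<^sub>m i) $$ (r, c))"
    by (rule poly_mat_entry[OF A r c d])
  also have "\<dots> = a * (1\<^sub>m n) $$ (r, c) + (\<Sum>i\<le>?d. poly.coeff p i * (A ^\<^sub>m Suc i) $$ (r, c))"
    unfolding sum.atMost_Suc_shift using A r c by simp
  also have "(\<Sum>i\<le>?d. poly.coeff p i * (A ^\<^sub>m Suc i) $$ (r, c)) = (A * poly_mat p A) $$ (r, c)"
  proof -
    have "(A * poly_mat p A) $$ (r, c) = (\<Sum>l<n. A $$ (r, l) * (\<Sum>i\<le>?d. poly.coeff p i * (A ^\<^sub>m i) $$ (l, c)))"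
      using A r c poly_mat_entry[OF A _ c order.refl] by (auto simp: scalar_prod_def atLeast0LessThan intro!: sum.cong)
    also have "\<dots> = (\<Sum>i\<le>?d. poly.coeff p i * (\<Sum>l<n. A $$ (r, l) * (A ^\<^sub>m i) $$ (l, c)))"
      by (simp add: sum_distrib_left sum_distrib_right sum.swap[of _ "{..<n}"] algebra_simps)
    also have "\<dots> = (\<Sum>i\<le>?d. poly.coeff p i * (A ^\<^sub>m Suc i) $$ (r, c))"
    proof (intro sum.cong refl arg_cong[where f="\<lambda>x. _ * x"])
      fix i
      have "(A ^\<^sub>m Suc i) $$ (r, c) = (A * A ^\<^sub>m i) $$ (r, c)" by (subst pow_mat_Suc_left[OF A]) simp
      also have "\<dots> = (\<Sum>l<n. A $$ (r, l) * (A ^\<^sub>m i) $$ (l, c))"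
        using A r c by (subst index_mult_mat) (auto simp: scalar_prod_def atLeast0LessThan)
      finally show "(\<Sum>l<n. A $$ (r, l) * (A ^\<^sub>m i) $$ (l, c)) = (A ^\<^sub>m Suc i) $$ (r, c)" by simp
    qed
    finally show ?thesis by simp
  qed
  finally show "poly_mat (pCons a p) A $$ (r, c) = (a \<cdot>\<^sub>m 1\<^sub>m n + A * poly_mat p A) $$ (r, c)"
    using A r c by simp
qed (use A in auto)

lemma poly_mat_zero: assumes A: "A \<in> carrier_mat n n" shows "poly_mat 0 A = 0\<^sub>m n n"
  using A unfolding poly_mat_def by (intro eq_matI) auto

lemma smult_zero_one_aux: "B \<in> carrier_mat n n \<Longrightarrow> (0::'a::comm_ring_1) \<cdot>\<^sub>m 1\<^sub>m n + B = B"
  by (intro eq_matI) auto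

lemma poly_mat_mult: assumes A: "(A :: 'a :: comm_ring_1 mat) \<in> carrier_mat n n"
  shows "poly_mat (p * q) A = poly_mat p A * poly_mat q A"
proof (induction p rule: pCons_induct)
  case 0
  then show ?case using A by (simp add: poly_mat_zero)
next
  case (pCons a p)
  have Pq: "poly_mat q A \<in> carrier_mat n n" and Pp: "poly_mat p A \<in> carrier_mat n n" using A by auto
  have "poly_mat (pCons a p * q) A = poly_mat (Polynomial.smult a q + pCons 0 (p * q)) A"
    by (simp add: mult_pCons_left)
  also have "\<dots> = a \<cdot>\<^sub>m poly_mat q A + (0 \<cdot>\<^sub>m 1\<^sub>m n + A * (poly_mat p A * poly_mat q A))"
    by (simp add: poly_mat_add[OF A] poly_mat_smult[OF A] poly_mat_pCons[OF A] pCons.IH)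
  also have "\<dots> = a \<cdot>\<^sub>m poly_mat q A + A * poly_mat p A * poly_mat q A"
  proof -
    have "A * (poly_mat p A * poly_mat q A) \<in> carrier_mat n n" using A Pq Pp by (metis mult_carrier_mat)
    from smult_zero_one_aux[OF this] show ?thesis
      using A Pq Pp by (simp add: assoc_mult_mat[of A n n _ n _ n])
  qed
  also have "\<dots> = (a \<cdot>\<^sub>m 1\<^sub>m n + A * poly_mat p A) * poly_mat q A"
    using A Pq Pp by (simp add: add_mult_distrib_mat[of _ n n _ _ n] mult_smult_assoc_mat[of _ n n _ n])
  also have "\<dots> = poly_mat (pCons a p) A * poly_mat q A" by (simp add: poly_mat_pCons[OF A])
  finally show ?case .
qed

lemma poly_mat_one: assumes A: "(A :: 'a :: comm_ring_1 mat) \<in> carrier_mat n n"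
  shows "poly_mat 1 A = 1\<^sub>m n"
proof -
  have "poly_mat (pCons 1 0) A = 1 \<cdot>\<^sub>m 1\<^sub>m n + A * 0\<^sub>m n n"
    using poly_mat_pCons[OF A, of 1 0] by (simp only: poly_mat_zero[OF A])
  also have "\<dots> = 1\<^sub>m n" using A by (intro eq_matI) auto
  finally show ?thesis by (metis one_pCons)
qed

lemma poly_mat_power: assumes A: "(A :: 'a :: comm_ring_1 mat) \<in> carrier_mat n n"
  shows "poly_mat (p ^ k) A = poly_mat p A ^\<^sub>m k"
  by (induction k) (use A in \<open>auto simp: poly_mat_one poly_mat_mult pow_mat_Suc_left[OF poly_mat_carrier[OF A]] simp del: pow_mat.simps(2)\<close>)

lemma poly_mat_linear: assumes A: "(A :: 'a :: comm_ring_1 mat) \<in> carrier_mat n n"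
  shows "poly_mat [:-a, 1:] A = A - a \<cdot>\<^sub>m 1\<^sub>m n"
proof -
  have "poly_mat [:-a, 1:] A = (-a) \<cdot>\<^sub>m 1\<^sub>m n + A * 1\<^sub>m n"
    using poly_mat_pCons[OF A, of "-a" "[:1:]"] poly_mat_one[OF A] by (metis one_pCons)
  also have "\<dots> = A - a \<cdot>\<^sub>m 1\<^sub>m n" using A by (intro eq_matI) auto
  finally show ?thesis .
qed

lemma poly_mat_hom: assumes A: "A \<in> carrier_mat n n"
  shows "map_mat (of_int :: int \<Rightarrow> 'a :: {comm_ring_1,ring_char_0}) (poly_mat p A) = poly_mat (of_int_poly p) (map_mat of_int A)"
proof (rule eq_matI)
  fix r c assume "r < dim_row (poly_mat (of_int_poly p) (map_mat (of_int :: int \<Rightarrow> 'a) A))"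
    "c < dim_col (poly_mat (of_int_poly p) (map_mat (of_int :: int \<Rightarrow> 'a) A))"
  then have r: "r < n" and c: "c < n" using A by auto
  have A': "map_mat (of_int :: int \<Rightarrow> 'a) A \<in> carrier_mat n n" using A by simp
  show "map_mat of_int (poly_mat p A) $$ (r, c) = poly_mat (of_int_poly p) (map_mat (of_int :: int \<Rightarrow> 'a) A) $$ (r, c)"
    using poly_mat_entry[OF A r c order.refl] poly_mat_entry[OF A' r c, of "of_int_poly p" "degree p"] A r c
    by (simp add: of_int_hom.mat_hom_pow[OF A, symmetric])
qed (use A in auto)

lemma transpose_pow: assumes A: "(A :: 'a :: comm_ring_1 mat) \<in> carrier_mat n n"
  shows "transpose_mat A ^\<^sub>m i = transpose_mat (A ^\<^sub>m i)"
proof (induction i)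
  case 0 then show ?case using A by simp
next
  case (Suc i)
  have "transpose_mat A ^\<^sub>m Suc i = transpose_mat (A ^\<^sub>m i) * transpose_mat A" using Suc by simp
  also have "\<dots> = transpose_mat (A * A ^\<^sub>m i)" using A by (simp add: transpose_mult[of _ n n _ n])
  also have "\<dots> = transpose_mat (A ^\<^sub>m Suc i)" by (subst pow_mat_Suc_left[OF A]) (rule refl)
  finally show ?case .
qed

lemma poly_mat_transpose: assumes A: "(A :: 'a :: comm_ring_1 mat) \<in> carrier_mat n n"
  shows "poly_mat p (transpose_mat A) = transpose_mat (poly_mat p A)"
proof (rule eq_matI)
  fix r c assume "r < dim_row (transpose_mat (poly_mat p A))" "c < dim_col (transpose_mat (poly_mat p A))"
  then have r: "r < n" and c: "c < n" using A by auto
  have A': "transpose_mat A \<in> carrier_mat n n" using A by simp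
  show "poly_mat p (transpose_mat A) $$ (r, c) = transpose_mat (poly_mat p A) $$ (r, c)"
    using poly_mat_entry[OF A c r order.refl] poly_mat_entry[OF A' r c order.refl] A r c
    by (simp add: transpose_pow[OF A])
qed (use A in auto)

lemma basis_nonzero: assumes b: "is_basis_family I A v" and i0: "i0 \<in> I" and z: "\<forall>a\<in>A. v i0 a = 0"
  shows False
proof -
  define c1 where "c1 = restrict (\<lambda>_. 0::real) I"
  define c2 where "c2 = restrict (\<lambda>i. if i = i0 then 1 else 0::real) I"
  define P where "P = (\<lambda>c. c \<in> extensional I \<and> (\<forall>a\<in>A. (0::real) = (\<Sum>i\<in>I. c i * v i a)))"
  from b have ex: "\<exists>!c. P c" unfolding is_basis_family_def P_def by (rule allE[where x="\<lambda>_. 0"])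
  have p1: "P c1"
    unfolding c1_def P_def by auto
  have p2: "P c2" unfolding P_def
  proof (intro conjI ballI)
    show "c2 \<in> extensional I" unfolding c2_def by auto
    fix a assume a: "a \<in> A"
    have "(\<Sum>i\<in>I. c2 i * v i a) = (\<Sum>i\<in>I. if i = i0 then v i0 a else 0)"
      unfolding c2_def by (intro sum.cong) auto
    also have "\<dots> = 0" using z a by (cases "finite I") auto
    finally show "0 = (\<Sum>i\<in>I. c2 i * v i a)" by simp
  qed
  have "c1 = c2" using ex p1 p2 by blast
  then have "c1 i0 = c2 i0" by simp
  then show False using i0 unfolding c1_def c2_def by simp
qed

lemma of_rat_int_poly: "map_poly (of_rat :: rat \<Rightarrow> 'a :: field_char_0) (of_int_poly p) = of_int_poly p"
  by (subst map_poly_map_poly) (auto simp: o_def)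

lemma conj_root:
  fixes B G :: "int poly" and \<mu> :: complex and \<alpha> :: real
  assumes irr: "irreducible B" and deg: "degree B \<noteq> 0"
    and mB: "poly (of_int_poly B) \<mu> = 0" and mG: "poly (of_int_poly G) \<mu> = 0"
    and aB: "poly (of_int_poly B) \<alpha> = 0"
  shows "poly (of_int_poly G) \<alpha> = 0"
proof -
  interpret R: map_poly_comm_ring_hom "of_rat :: rat \<Rightarrow> real" ..
  interpret C: map_poly_comm_ring_hom "of_rat :: rat \<Rightarrow> complex" ..
  define Bq where "Bq = (of_int_poly B :: rat poly)"
  define Gq where "Gq = (of_int_poly G :: rat poly)"
  have "irreducible\<^sub>d B" using irreducible_primitive_connect[OF irreducible_imp_primitive[OF irr deg]] irr by simp
  then have "irreducible\<^sub>d Bq" unfolding Bq_def by (rule irreducible\<^sub>d_int_rat)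
  then have irrq: "irreducible Bq" by simp
  define g where "g = gcd Bq Gq"
  have "g dvd Bq" unfolding g_def by simp
  from irreducibleD'[OF irrq this] consider "Bq dvd g" | "is_unit g" by blast
  then show ?thesis
  proof cases
    case 1
    then have "Bq dvd Gq" unfolding g_def using dvd_trans gcd_dvd2 by blast
    then obtain h where h: "Gq = Bq * h" by (elim dvdE)
    have "of_int_poly G = map_poly (of_rat :: rat \<Rightarrow> real) Gq" unfolding Gq_def by (simp add: of_rat_int_poly)
    also have "\<dots> = of_int_poly B * map_poly of_rat h" unfolding h R.hom_mult Bq_def by (simp add: of_rat_int_poly)
    finally show ?thesis using aB by simp
  next
    case 2
    obtain x y where xy: "x * Bq + y * Gq = g" using bezout_coefficients_fst_snd[of Bq Gq] unfolding g_def by blast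
    have "map_poly (of_rat :: rat \<Rightarrow> complex) g = map_poly of_rat x * of_int_poly B + map_poly of_rat y * of_int_poly G"
      unfolding xy[symmetric] Bq_def Gq_def by (simp add: of_rat_int_poly R.hom_add C.hom_add C.hom_mult)
    then have "poly (map_poly (of_rat :: rat \<Rightarrow> complex) g) \<mu> = 0" using mB mG by simp
    moreover from 2 obtain c where "g = [:c:]" "c \<noteq> 0"
      by (metis is_unit_polyE' monom_0)
    ultimately show ?thesis by simp
  qed
qed

lemma list_eigen:
  fixes Ac :: "complex mat"
  assumes A: "Ac \<in> carrier_mat n n"
  shows "v \<in> carrier_vec n \<Longrightarrow> v \<noteq> 0\<^sub>v n \<Longrightarrow> poly_mat (\<Prod>a\<leftarrow>as. [:-a, 1:]) Ac *\<^sub>v v = 0\<^sub>v n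
    \<Longrightarrow> \<exists>a\<in>set as. eigenvalue Ac a"
proof (induction as arbitrary: v)
  case Nil
  then show ?case using A by (simp add: poly_mat_one)
next
  case (Cons a as)
  define R where "R = poly_mat (\<Prod>a\<leftarrow>as. [:-a, 1:]) Ac"
  have R: "R \<in> carrier_mat n n" unfolding R_def using A by simp
  define w where "w = R *\<^sub>v v"
  have w: "w \<in> carrier_vec n" unfolding w_def using R Cons.prems by simp
  show ?case
  proof (cases "w = 0\<^sub>v n")
    case True
    then show ?thesis using Cons.IH[OF Cons.prems(1,2)] unfolding w_def R_def by auto
  next
    case False
    have "poly_mat (\<Prod>a\<leftarrow>a # as. [:-a, 1:]) Ac = (Ac - a \<cdot>\<^sub>m 1\<^sub>m n) * R"
    proof -
      have eq: "(\<Prod>a\<leftarrow>a # as. [:-a, 1:]) = [:-a, 1:] * (\<Prod>a\<leftarrow>as. [:-a, 1:])" by simp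
      show ?thesis unfolding eq poly_mat_mult[OF A] poly_mat_linear[OF A] R_def ..
    qed
    then have "(Ac - a \<cdot>\<^sub>m 1\<^sub>m n) *\<^sub>v w = 0\<^sub>v n"
      using Cons.prems A R unfolding w_def by (metis assoc_mult_mat_vec minus_carrier_mat smult_carrier_mat one_carrier_mat)
    then have "Ac *\<^sub>v w - (a \<cdot>\<^sub>m 1\<^sub>m n) *\<^sub>v w = 0\<^sub>v n"
      using A w by (simp add: minus_mult_distrib_mat_vec[of _ n n])
    moreover have "(a \<cdot>\<^sub>m 1\<^sub>m n) *\<^sub>v w = a \<cdot>\<^sub>v w"
    proof (rule eq_vecI)
      fix i assume "i < dim_vec (a \<cdot>\<^sub>v w)"
      then have i: "i < n" using w by simp
      have "((a \<cdot>\<^sub>m 1\<^sub>m n) *\<^sub>v w) $ i = (\<Sum>j = 0..<n. a * (if j = i then 1 else 0) * w $ j)"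
        using i w by (simp add: scalar_prod_def)
      also have "\<dots> = (\<Sum>j\<in>{0..<n}. (if j = i then a * w $ j else 0))"
        by (rule sum.cong) auto
      also have "\<dots> = a * w $ i" using i by (simp add: sum.delta)
      finally show "((a \<cdot>\<^sub>m 1\<^sub>m n) *\<^sub>v w) $ i = (a \<cdot>\<^sub>v w) $ i" using i w by simp
    qed (use w in simp)
    ultimately have E: "Ac *\<^sub>v w - a \<cdot>\<^sub>v w = 0\<^sub>v n" by simp
    have "Ac *\<^sub>v w = a \<cdot>\<^sub>v w"
    proof (rule eq_vecI)
      fix i assume i: "i < dim_vec (a \<cdot>\<^sub>v w)"
      then have i': "i < n" using w by simp
      have "(Ac *\<^sub>v w - a \<cdot>\<^sub>v w) $ i = 0" using E i' by simp
      then show "(Ac *\<^sub>v w) $ i = (a \<cdot>\<^sub>v w) $ i" using i' A w by simp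
    qed (use A w in simp)
    then have "eigenvector Ac w a" unfolding eigenvector_def using A w False by auto
    then show ?thesis unfolding eigenvalue_def by auto
  qed
qed

lemma root_lemma:
  fixes Ac :: "complex mat" and F :: "complex poly"
  assumes A: "Ac \<in> carrier_mat n n" and v: "v \<in> carrier_vec n" "v \<noteq> 0\<^sub>v n"
    and Fv: "poly_mat F Ac *\<^sub>v v = 0\<^sub>v n"
  shows "\<exists>\<mu>. poly F \<mu> = 0 \<and> eigenvalue Ac \<mu>"
proof (cases "F = 0")
  case True
  obtain as where cp: "char_poly Ac = (\<Prod>a\<leftarrow>as. [:- a, 1:])" and len: "length as = n"
    using char_poly_factorized[OF A] by blast
  have "n \<noteq> 0" using v by auto
  then obtain a as' where "as = a # as'" using len by (cases as) auto
  then have "poly (char_poly Ac) a = 0" unfolding cp by simp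
  then have "eigenvalue Ac a" using eigenvalue_root_char_poly[OF A] by simp
  then show ?thesis using True by auto
next
  case False
  obtain as where fa: "Polynomial.smult (lead_coeff F) (\<Prod>a\<leftarrow>as. [:- a, 1:]) = F"
    using fundamental_theorem_algebra_factorized by blast
  define W where "W = poly_mat (\<Prod>a\<leftarrow>as. [:- a, 1:]) Ac"
  have W: "W \<in> carrier_mat n n" unfolding W_def using A by simp
  have lc: "lead_coeff F \<noteq> 0" using False by simp
  have PF: "poly_mat F Ac = lead_coeff F \<cdot>\<^sub>m W"
  proof -
    have "poly_mat F Ac = poly_mat (Polynomial.smult (lead_coeff F) (\<Prod>a\<leftarrow>as. [:- a, 1:])) Ac"
      by (simp only: fa)
    then show ?thesis unfolding W_def poly_mat_smult[OF A] .
  qed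
  have "W *\<^sub>v v = 0\<^sub>v n"
  proof (rule eq_vecI)
    fix i assume "i < dim_vec (0\<^sub>v n :: complex vec)"
    then have i: "i < n" by simp
    have "0 = (poly_mat F Ac *\<^sub>v v) $ i" using Fv i by simp
    also have "\<dots> = (\<Sum>j = 0..<n. (lead_coeff F * W $$ (i, j)) * v $ j)"
      unfolding PF using i W v by (simp add: scalar_prod_def)
    also have "\<dots> = lead_coeff F * (W *\<^sub>v v) $ i"
      using i W v by (simp add: scalar_prod_def sum_distrib_left mult.assoc)
    finally show "(W *\<^sub>v v) $ i = 0\<^sub>v n $ i" using i lc by simp
  qed (use W in simp)
  from list_eigen[OF A v this[unfolded W_def]] obtain a where a: "a \<in> set as" "eigenvalue Ac a" by blast
  have "poly (Polynomial.smult (lead_coeff F) (\<Prod>a\<leftarrow>as. [:- a, 1:])) a = 0" using a(1)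
    by (simp add: poly_prod_list prod_list_zero_iff)
  then have "poly F a = 0" by (simp only: fa)
  then show ?thesis using a by auto
qed

lemma dvd_eval:
  fixes \<mu> :: "'a :: {comm_ring_1, ring_char_0}"
  assumes "B dvd X - Y" and "poly (of_int_poly B) \<mu> = 0"
  shows "poly (of_int_poly X) \<mu> = poly (of_int_poly Y) \<mu>"
proof -
  from assms(1) obtain Q where "X - Y = B * Q" by (elim dvdE)
  then have "of_int_poly X - of_int_poly Y = (of_int_poly B * of_int_poly Q :: 'a poly)"
    by (metis of_int_poly_hom.hom_minus of_int_poly_hom.hom_mult)
  then have "poly (of_int_poly X) \<mu> - poly (of_int_poly Y) \<mu> = 0"
    using assms(2) by (metis mult_zero_left poly_diff poly_mult)
  then show ?thesis by simp
qed

lemma noroot: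
  fixes Bj :: "int poly" and Pf :: "nat \<Rightarrow> int poly" and \<mu> :: complex
  assumes irr: "irreducible Bj" and deg: "degree Bj \<noteq> 0"
    and basis: "is_basis_family {1..s} (real_roots_int Bj) (\<lambda>i \<alpha>. ln (poly (of_int_poly (Pf i)) \<alpha>))"
    and s: "1 \<le> s"
    and pos: "\<forall>\<alpha>\<in>real_roots_int Bj. poly (of_int_poly (Pf 1)) \<alpha> > (0::real)"
    and e: "e > 0" and mu: "poly (of_int_poly Bj) \<mu> = 0"
    and one: "poly (of_int_poly (Pf 1)) \<mu> ^ e = 1"
  shows False
proof -
  define G where "G = Pf 1 ^ e - 1"
  have mG: "poly (of_int_poly G) \<mu> = 0" unfolding G_def using one
    by (simp add: of_int_poly_hom.hom_minus of_int_poly_hom.hom_power)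
  have "\<forall>\<alpha>\<in>real_roots_int Bj. ln (poly (of_int_poly (Pf 1)) \<alpha>) = 0"
  proof
    fix \<alpha> assume a: "\<alpha> \<in> real_roots_int Bj"
    then have aB: "poly (of_int_poly Bj) \<alpha> = 0" unfolding real_roots_int_def by simp
    have "poly (of_int_poly G) \<alpha> = 0" by (rule conj_root[OF irr deg mu mG aB])
    then have p1: "poly (of_int_poly (Pf 1)) \<alpha> ^ e = 1" unfolding G_def
      by (simp add: of_int_poly_hom.hom_minus of_int_poly_hom.hom_power)
    have "poly (of_int_poly (Pf 1)) \<alpha> > 0" using pos a by auto
    then have "poly (of_int_poly (Pf 1)) \<alpha> = 1"
      using power_eq_iff_eq_base[of e "poly (of_int_poly (Pf 1)) \<alpha>" 1] p1 e by simp
    then show "ln (poly (of_int_poly (Pf 1)) \<alpha>) = 0" by simp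
  qed
  then show False using basis_nonzero[OF basis, of 1] s by simp
qed

primrec xseq :: "(nat \<Rightarrow> 'a::comm_ring_1 mat) \<Rightarrow> 'a mat \<Rightarrow> nat \<Rightarrow> 'a mat" where
  "xseq f X0 0 = X0"
| "xseq f X0 (Suc m) = f (m + 2) * xseq f X0 m"

primrec hseq :: "(nat \<Rightarrow> int poly) \<Rightarrow> nat \<Rightarrow> int poly" where
  "hseq E 0 = 1"
| "hseq E (Suc m) = hseq E m * E (m + 2)"

lemma hseq_eval: "poly (of_int_poly (hseq E m)) (\<mu>::complex) = (\<Prod>j\<in>{2..m+1}. poly (of_int_poly (E j)) \<mu>)"
proof (induction m)
  case 0 then show ?case by simp
next
  case (Suc m)
  have "{2..Suc m + 1} = insert (m + 2) {2..m+1}" by auto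
  then show ?case using Suc by (simp add: of_int_poly_hom.hom_mult mult.commute)
qed

lemma gen_pow: assumes "g \<in> Gs" "g \<in> carrier_mat N N"
  shows "g ^\<^sub>m i \<in> gen_group N Gs"
proof (induction i)
  case 0 then show ?case using assms gen_group.gen_one by auto
next
  case (Suc i)
  have "g ^\<^sub>m Suc i = g * g ^\<^sub>m i" by (rule pow_mat_Suc_left[OF assms(2)])
  then show ?case using gen_group.gen_mult[OF assms(1) Suc] by simp
qed

lemma deg0_noroot: "degree (p :: real poly) = 0 \<Longrightarrow> p \<noteq> 0 \<Longrightarrow> poly p x \<noteq> 0"
  by (cases p) (auto split: if_splits)

theorem proposition6p12:
  fixes N k :: nat and M :: "int mat" and B :: "nat \<Rightarrow> int poly"
    and D :: "nat \<times> nat \<Rightarrow> int poly"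
  assumes "M \<in> SL_int N"
    and "type_J_factorization (char_poly M) k B"
    and "primary_dirichlet_family N M k B D"
  shows "\<exists>X \<in> gen_group N ((\<lambda>ji. poly_mat (D ji) (transpose_mat M)) ` primary_index k B).
           \<not> eigenvalue (map_mat complex_of_int X) 1"
proof -
  from assms(1) have M: "M \<in> carrier_mat N N" and detM: "det M = 1" by (auto simp: SL_int_def)
  from assms(2) have k1: "k \<ge> 1" and Cprod: "char_poly M = (\<Prod>i\<in>{0..k}. B i)"
    and B0: "real_roots_int (B 0) = {}"
    and Bj: "\<forall>i\<in>{1..k}. irreducible (B i) \<and> real_roots_int (B i) \<noteq> {} \<and> has_nonreal_root (B i)"
    unfolding type_J_factorization_def by auto
  from assms(3) have DF: "dirichlet_family N M (primary_index k B) D"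
    unfolding primary_dirichlet_family_def by auto
  from assms(3) obtain P :: "nat \<times> nat \<Rightarrow> int poly" where
    P1: "\<forall>j\<in>{1..k}.
           (\<forall>i\<in>{1..card (real_roots_int (B j))}.
              (\<exists>Q. B j dvd (P (j, i) * Q - 1)) \<and>
              (\<forall>\<alpha>\<in>real_roots_int (B j). poly (map_poly of_int (P (j, i))) \<alpha> > 0)) \<and>
           is_basis_family {1..card (real_roots_int (B j))} (real_roots_int (B j))
             (\<lambda>i \<alpha>. ln (poly (map_poly of_int (P (j, i))) \<alpha>))"
    and P2: "\<forall>(j, i)\<in>primary_index k B.
           B 0 dvd (D (j, i) - [:0, 1:]) \<and>
           B j dvd (D (j, i) - P (j, i)) \<and>
           (\<forall>\<mu>\<in>{1..k}. \<mu> \<noteq> j \<longrightarrow> B \<mu> dvd (D (j, i) - 1))"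
    unfolding primary_dirichlet_family_def by blast
  from DF have SL: "\<forall>i\<in>primary_index k B. poly_mat (D i) M \<in> SL_int N"
    unfolding dirichlet_family_def by auto

  have irrB: "irreducible (B j)" if "j \<in> {1..k}" for j using Bj that by auto
  have finB: "finite (real_roots_int (B j))" if j: "j \<in> {1..k}" for j
  proof -
    have "B j \<noteq> 0" using irrB[OF j] by auto
    then have "(of_int_poly (B j) :: real poly) \<noteq> 0" by simp
    then show ?thesis unfolding real_roots_int_def by (rule poly_roots_finite)
  qed
  have s1: "1 \<le> card (real_roots_int (B j))" if j: "j \<in> {1..k}" for j
    using finB[OF j] Bj j by (simp add: Suc_le_eq card_gt_0_iff)
  have degB: "degree (B j) \<noteq> 0" if j: "j \<in> {1..k}" for j
  proof
    assume d: "degree (B j) = 0"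
    have "real_roots_int (B j) \<noteq> {}" using Bj j by auto
    then obtain \<alpha> where a: "\<alpha> \<in> real_roots_int (B j)" by blast
    have "B j \<noteq> 0" using irrB[OF j] by auto
    then have "(of_int_poly (B j) :: real poly) \<noteq> 0" by simp
    moreover have "degree (of_int_poly (B j) :: real poly) = 0" using d by simp
    ultimately show False using deg0_noroot a unfolding real_roots_int_def by blast
  qed
  have idx: "(j, 1) \<in> primary_index k B" if j: "j \<in> {1..k}" for j
    using s1[OF j] j unfolding primary_index_def by auto
  have Pa: "B 0 dvd (D (j, 1) - [:0, 1:])" if j: "j \<in> {1..k}" for j using P2 idx[OF j] by auto
  have Pb: "B j dvd (D (j, 1) - P (j, 1))" if j: "j \<in> {1..k}" for j using P2 idx[OF j] by auto
  have Pc: "B l dvd (D (j, 1) - 1)" if j: "j \<in> {1..k}" and l: "l \<in> {1..k}" "l \<noteq> j" for j l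
    using P2 idx[OF j] l by auto
  have Ppos: "\<forall>\<alpha>\<in>real_roots_int (B j). poly (of_int_poly (P (j, 1))) \<alpha> > (0::real)" if j: "j \<in> {1..k}" for j
    using P1 j s1[OF j] by auto
  have Pbasis: "is_basis_family {1..card (real_roots_int (B j))} (real_roots_int (B j))
             (\<lambda>i \<alpha>. ln (poly (of_int_poly (P (j, i))) \<alpha>))" if j: "j \<in> {1..k}" for j
    using P1 j by auto
  have NR: "False" if j: "j \<in> {1..k}" and e: "e > 0" and mu: "poly (of_int_poly (B j)) \<mu> = 0"
    and one: "poly (of_int_poly (P (j, 1))) \<mu> ^ e = (1::complex)" for j e \<mu>
    using noroot[OF irrB[OF j] degB[OF j] _ s1[OF j] _ e mu, of "\<lambda>i. P (j, i)"] Pbasis[OF j] Ppos[OF j] one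
    by simp

  define A where "A = transpose_mat M"
  have A: "A \<in> carrier_mat N N" unfolding A_def using M by simp
  define Gs where "Gs = (\<lambda>ji. poly_mat (D ji) (transpose_mat M)) ` primary_index k B"
  define E where "E j = D (j, 1)" for j
  define G where "G j = poly_mat (E j) A" for j
  have G_in: "G j \<in> Gs" if j: "j \<in> {1..k}" for j
    unfolding G_def Gs_def E_def A_def using idx[OF j] by auto
  have G_car: "G j \<in> carrier_mat N N" for j unfolding G_def using A by simp
  have G_det: "det (G j) = 1" if j: "j \<in> {1..k}" for j
  proof -
    have "G j = transpose_mat (poly_mat (D (j, 1)) M)"
      unfolding G_def E_def A_def by (rule poly_mat_transpose[OF M])
    moreover have "det (transpose_mat (poly_mat (D (j, 1)) M)) = det (poly_mat (D (j, 1)) M)"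
      using M by (intro det_transpose) auto
    ultimately show ?thesis using SL idx[OF j] unfolding SL_int_def by auto
  qed
  define Iv where "Iv j = adj_mat (G j)" for j
  have Iv_car: "Iv j \<in> carrier_mat N N" for j unfolding Iv_def using adj_mat(1)[OF G_car] .
  have one_sm: "(1::int) \<cdot>\<^sub>m 1\<^sub>m N = 1\<^sub>m N" by (intro eq_matI) auto
  have IvG: "Iv j * G j = 1\<^sub>m N" if j: "j \<in> {1..k}" for j
    unfolding Iv_def using adj_mat(3)[OF G_car] G_det[OF j] one_sm by simp
  have GIv: "G j * Iv j = 1\<^sub>m N" if j: "j \<in> {1..k}" for j
    unfolding Iv_def using adj_mat(2)[OF G_car] G_det[OF j] one_sm by simp
  define X0 where "X0 = G 1 ^\<^sub>m k"
  have X0_car: "X0 \<in> carrier_mat N N" unfolding X0_def using G_car by simp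
  have X_car: "xseq Iv X0 m \<in> carrier_mat N N" for m
  proof (induction m)
    case (Suc m)
    then show ?case using Iv_car[of "m + 2"] by (simp add: mult_carrier_mat)
  qed (use X0_car in simp)
  have X_mem: "m \<le> k - 1 \<Longrightarrow> xseq Iv X0 m \<in> gen_group N Gs" for m
  proof (induction m)
    case 0
    then show ?case unfolding X0_def using gen_pow[OF G_in G_car] k1 by auto
  next
    case (Suc m)
    then have j: "m + 2 \<in> {1..k}" by auto
    have "Iv (m + 2) * xseq Iv X0 m \<in> gen_group N Gs"
      by (rule gen_group.gen_inv[OF G_in[OF j] Iv_car IvG[OF j]]) (use Suc in auto)
    then show ?case by simp
  qed
  have H_id: "m \<le> k - 1 \<Longrightarrow> poly_mat (hseq E m) A * xseq Iv X0 m = X0" for m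
  proof (induction m)
    case 0
    then show ?case using X0_car by (simp add: poly_mat_one[OF A])
  next
    case (Suc m)
    then have j: "m + 2 \<in> {1..k}" by auto
    define PH where "PH = poly_mat (hseq E m) A"
    have PH: "PH \<in> carrier_mat N N" unfolding PH_def using A by simp
    have "poly_mat (hseq E (Suc m)) A * xseq Iv X0 (Suc m) = (PH * G (m + 2)) * (Iv (m + 2) * xseq Iv X0 m)"
      unfolding PH_def G_def by (simp add: poly_mat_mult[OF A])
    also have "\<dots> = PH * ((G (m + 2) * Iv (m + 2)) * xseq Iv X0 m)"
    proof -
      have ix: "Iv (m + 2) * xseq Iv X0 m \<in> carrier_mat N N" by (rule mult_carrier_mat[OF Iv_car X_car])
      have "(PH * G (m + 2)) * (Iv (m + 2) * xseq Iv X0 m) = PH * (G (m + 2) * (Iv (m + 2) * xseq Iv X0 m))"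
        by (rule assoc_mult_mat[OF PH G_car ix])
      also have "G (m + 2) * (Iv (m + 2) * xseq Iv X0 m) = (G (m + 2) * Iv (m + 2)) * xseq Iv X0 m"
        by (rule assoc_mult_mat[OF G_car Iv_car X_car, symmetric])
      finally show ?thesis .
    qed
    also have "\<dots> = PH * xseq Iv X0 m" using GIv[OF j] left_mult_one_mat[OF X_car[of m]] by simp
    also have "\<dots> = X0" using Suc unfolding PH_def by simp
    finally show ?case .
  qed

  define X where "X = xseq Iv X0 (k - 1)"
  show ?thesis
  proof (rule bexI[of _ X])
    show "X \<in> gen_group N ((\<lambda>ji. poly_mat (D ji) (transpose_mat M)) ` primary_index k B)"
      using X_mem[of "k - 1"] unfolding X_def Gs_def by simp
    show "\<not> eigenvalue (map_mat complex_of_int X) 1"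
    proof
      assume "eigenvalue (map_mat complex_of_int X) 1"
      then obtain v where v: "v \<in> carrier_vec N" "v \<noteq> 0\<^sub>v N"
        and Xv: "map_mat complex_of_int X *\<^sub>v v = 1 \<cdot>\<^sub>v v"
        unfolding eigenvalue_def eigenvector_def using X_car[of "k - 1"] unfolding X_def by auto
      define Ac where "Ac = map_mat complex_of_int A"
      have Ac: "Ac \<in> carrier_mat N N" unfolding Ac_def using A by simp
      define H where "H = hseq E (k - 1)"
      define F where "F = E 1 ^ k - H"
      define Fc where "Fc = (of_int_poly F :: complex poly)"
      have Xc: "map_mat complex_of_int X \<in> carrier_mat N N" using X_car unfolding X_def by simp
      have Hc: "poly_mat (of_int_poly H) Ac \<in> carrier_mat N N" using Ac by simp
      have HX: "poly_mat (of_int_poly H) Ac * map_mat complex_of_int X = map_mat complex_of_int X0"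
      proof -
        have "map_mat complex_of_int (poly_mat (hseq E (k - 1)) A * xseq Iv X0 (k - 1))
          = map_mat complex_of_int (poly_mat (hseq E (k - 1)) A) * map_mat complex_of_int (xseq Iv X0 (k - 1))"
          by (rule of_int_hom.mat_hom_mult[OF poly_mat_carrier[OF A] X_car])
        then show ?thesis using H_id[of "k - 1"]
          unfolding Ac_def poly_mat_hom[OF A, symmetric] X_def H_def by simp
      qed
      have X0c: "map_mat complex_of_int X0 = poly_mat (of_int_poly (E 1)) Ac ^\<^sub>m k"
      proof -
        have "map_mat complex_of_int (poly_mat (E 1) A ^\<^sub>m k) = map_mat complex_of_int (poly_mat (E 1) A) ^\<^sub>m k"
          by (rule of_int_hom.mat_hom_pow[OF poly_mat_carrier[OF A]])
        then show ?thesis unfolding X0_def G_def Ac_def using poly_mat_hom[OF A, of "E 1", where 'a=complex] by simp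
      qed
      have "map_mat complex_of_int X0 *\<^sub>v v = poly_mat (of_int_poly H) Ac *\<^sub>v v"
      proof -
        have "map_mat complex_of_int X0 *\<^sub>v v = poly_mat (of_int_poly H) Ac *\<^sub>v (map_mat complex_of_int X *\<^sub>v v)"
          unfolding HX[symmetric] using Hc Xc v by simp
        also have "\<dots> = poly_mat (of_int_poly H) Ac *\<^sub>v v" using Xv v by simp
        finally show ?thesis .
      qed
      moreover have "poly_mat Fc Ac = map_mat complex_of_int X0 - poly_mat (of_int_poly H) Ac"
        unfolding Fc_def F_def X0c
        by (simp add: of_int_poly_hom.hom_minus of_int_poly_hom.hom_power poly_mat_minus[OF Ac] poly_mat_power[OF Ac])
      ultimately have Fv: "poly_mat Fc Ac *\<^sub>v v = 0\<^sub>v N"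
        using Hc v X0_car
        by (simp add: minus_mult_distrib_mat_vec[of _ N N])
      from root_lemma[OF Ac v Fv] obtain \<mu> where mF: "poly Fc \<mu> = 0" and ev: "eigenvalue Ac \<mu>" by blast
      have "Ac = transpose_mat (map_mat complex_of_int M)" unfolding Ac_def A_def by (simp add: map_mat_transpose)
      then have "char_poly Ac = char_poly (map_mat complex_of_int M)"
        using M by (simp add: char_poly_transpose_mat[of _ N])
      also have "\<dots> = of_int_poly (char_poly M)" using of_int_hom.char_poly_hom[OF M] by simp
      also have "\<dots> = (\<Prod>i\<in>{0..k}. of_int_poly (B i))" unfolding Cprod by (simp add: of_int_poly_hom.hom_prod)
      finally have "poly (\<Prod>i\<in>{0..k}. of_int_poly (B i)) \<mu> = 0"
        using eigenvalue_root_char_poly[OF Ac] ev by metis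
      then obtain i where i: "i \<in> {0..k}" and mB: "poly (of_int_poly (B i)) \<mu> = 0"
        by (auto simp: poly_prod prod_zero_iff)
      have pF: "poly Fc \<mu> = poly (of_int_poly (E 1)) \<mu> ^ k - (\<Prod>j\<in>{2..k}. poly (of_int_poly (E j)) \<mu>)"
        unfolding Fc_def F_def H_def using k1
        by (simp add: of_int_poly_hom.hom_minus of_int_poly_hom.hom_power hseq_eval)
      show False
      proof (cases "i = 0")
        case True
        have ev0: "poly (of_int_poly (E j)) \<mu> = \<mu>" if j: "j \<in> {1..k}" for j
          using dvd_eval[OF Pa[OF j], of \<mu>] mB True unfolding E_def by simp
        have "(\<Prod>j\<in>{2..k}. poly (of_int_poly (E j)) \<mu>) = (\<Prod>j\<in>{2..k}. \<mu>)"
          by (rule prod.cong) (auto intro: ev0)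
        also have "\<dots> = \<mu> ^ (k - 1)" by simp
        finally have pr: "(\<Prod>j\<in>{2..k}. poly (of_int_poly (E j)) \<mu>) = \<mu> ^ (k - 1)" .
        from pr pF mF ev0[of 1] k1 have "\<mu> ^ k - \<mu> ^ (k - 1) = 0" by simp
        moreover have "\<mu> ^ k = \<mu> * \<mu> ^ (k - 1)" using k1 by (cases k) auto
        ultimately have "\<mu> ^ (k - 1) * (\<mu> - 1) = 0" by (simp add: algebra_simps)
        then have "\<mu> = of_int 0 \<or> \<mu> = of_int 1" by auto
        then obtain c :: int where c: "\<mu> = of_int c" by blast
        have "of_int (poly (B 0) c) = (0::complex)" using mB True unfolding c of_int_hom.poly_map_poly by simp
        then have "poly (B 0) c = 0" by simp
        then have "poly (of_int_poly (B 0) :: real poly) (of_int c) = 0" by (simp add: of_int_hom.poly_map_poly)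
        then have "real_of_int c \<in> real_roots_int (B 0)" unfolding real_roots_int_def by simp
        then show False using B0 by simp
      next
        case False
        then have i1: "i \<in> {1..k}" using i by auto
        show False
        proof (cases "i = 1")
          case True
          have e1: "poly (of_int_poly (E 1)) \<mu> = poly (of_int_poly (P (1, 1))) \<mu>"
            using dvd_eval[OF Pb[OF i1[unfolded True]], of \<mu>] mB True unfolding E_def by simp
          have ej: "poly (of_int_poly (E j)) \<mu> = 1" if j: "j \<in> {2..k}" for j
            using dvd_eval[OF Pc[of j 1], of \<mu>] mB True j k1 unfolding E_def by simp
          have "poly (of_int_poly (P (1, 1))) \<mu> ^ k = 1" using pF mF e1 ej by simp
          then show False using NR[of 1 k \<mu>] mB True k1 by simp
        next
          case False
          then have i2: "i \<in> {2..k}" using i1 by auto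
          have e1: "poly (of_int_poly (E 1)) \<mu> = 1"
            using dvd_eval[OF Pc[of 1 i], of \<mu>] mB False i1 k1 unfolding E_def by simp
          have ej: "poly (of_int_poly (E j)) \<mu> = (if j = i then poly (of_int_poly (P (i, 1))) \<mu> else 1)"
            if j: "j \<in> {2..k}" for j
          proof (cases "j = i")
            case True
            then show ?thesis using dvd_eval[OF Pb[OF i1], of \<mu>] mB unfolding E_def by simp
          next
            case False
            then show ?thesis using dvd_eval[OF Pc[of j i], of \<mu>] mB j i1 unfolding E_def by simp
          qed
          have "(\<Prod>j\<in>{2..k}. poly (of_int_poly (E j)) \<mu>) = poly (of_int_poly (P (i, 1))) \<mu>"
            using ej i2 by (simp add: prod.delta)
          then have "poly (of_int_poly (P (i, 1))) \<mu> ^ 1 = 1" using pF mF e1 by simp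
          then show False using NR[OF i1, of 1 \<mu>] mB by simp
        qed
      qed
    qed
  qed
qed

end
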